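(* Let $k$ be a field and $\mathcal{R}=\mathrm{RCFM}(k)$. Then: (1) $\mathsf{A}\mathcal{R}=\{\mathsf{R}\in\mathcal{R}: \mathsf{r}_{0j}=0\text{ for all }j\}$; (2) $(\mathsf{I}-\mathsf{A})\mathcal{R}=\{\mathsf{R}\in\mathcal{R}: \sum_{i\in\mathbb{N}_0}\mathsf{r}_{ij}=0\text{ for all }j\}$; (3) $(\mathsf{I}-\mathsf{A}^t)\mathcal{R}=\{\mathsf{R}\in\mathcal{R}: \text{for every }i\in\mathbb{N}_0,\ \sum_{n\ge i}\mathsf{r}_{nj}=0\text{ for all but finitely many }j\}$; (4) $(\mathsf{I}-\mathsf{B}^t)\mathcal{R}=\{\mathsf{R}\in\mathcal{R}: \text{for every }m\in\mathbb{N}_0\text{ and }i\le m,\ \sum_{n\ge m}\mathsf{r}_{i+\frac{n(n+1)}{2},\,j}=0\text{ for all but finitely many }j\}$.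
   Context: $\mathcal{R}=\mathrm{RCFM}(k)$ is the $k$-algebra of $\mathbb{N}_0\times\mathbb{N}_0$ matrices over $k$ with finitely many nonzero entries in each row and each column; $\mathsf{r}_{ij}$ denotes the $(i,j)$ entry of $\mathsf{R}$ (the sums above are finite since columns are finite). $\mathsf{A}$: $\mathsf{a}_{i+1,i}=1$ ($i\in\mathbb{N}_0$), other entries $0$; $\mathsf{B}$: $\mathsf{b}_{\frac{n(n+1)}{2}+i,\frac{(n-1)n}{2}+i}=1$ ($n>0$, $0\le i<n$), other entries $0$; $\mathsf{I}$ is the identity and ${}^t$ transposition. *)

theory Defs
  imports Main
begin

text \<open>N_0 x N_0 matrices over k, represented as functions (row index, column index).\<close>
type_synonym 'a nmat = "nat \<Rightarrow> nat \<Rightarrow> 'a"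

definition RCFM :: "'a::zero nmat set" where
  "RCFM = {R. (\<forall>i. finite {j. R i j \<noteq> 0}) \<and> (\<forall>j. finite {i. R i j \<noteq> 0})}"

text \<open>Matrix product; the sum over l is finite for row-finite M (only nonzero terms of row i of M).\<close>
definition nmat_mult :: "'a::semiring_0 nmat \<Rightarrow> 'a nmat \<Rightarrow> 'a nmat" (infixl "\<star>" 70) where
  "M \<star> N = (\<lambda>i j. \<Sum>l\<in>{l. M i l \<noteq> 0}. M i l * N l j)"

definition nmat_id :: "'a::{zero,one} nmat" where
  "nmat_id = (\<lambda>i j. if i = j then 1 else 0)"

definition nmat_minus :: "'a::minus nmat \<Rightarrow> 'a nmat \<Rightarrow> 'a nmat" where
  "nmat_minus M N = (\<lambda>i j. M i j - N i j)"

definition nmat_transpose :: "'a nmat \<Rightarrow> 'a nmat" where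
  "nmat_transpose M = (\<lambda>i j. M j i)"

definition matA :: "'a::{zero,one} nmat" where
  "matA = (\<lambda>i j. if i = Suc j then 1 else 0)"

definition matB :: "'a::{zero,one} nmat" where
  "matB = (\<lambda>r c. if (\<exists>n i. 0 < n \<and> i < n \<and> r = n * (n + 1) div 2 + i \<and> c = (n - 1) * n div 2 + i)
                 then 1 else 0)"

definition left_mult_image :: "'a::semiring_0 nmat \<Rightarrow> 'a nmat set" where
  "left_mult_image M = {M \<star> R | R. R \<in> RCFM}"

definition col_sum :: "'a::comm_monoid_add nmat \<Rightarrow> nat \<Rightarrow> 'a" where
  "col_sum R j = (\<Sum>i\<in>{i. R i j \<noteq> 0}. R i j)"

definition tail_col_sum :: "'a::comm_monoid_add nmat \<Rightarrow> nat \<Rightarrow> nat \<Rightarrow> 'a" where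
  "tail_col_sum R i j = (\<Sum>n\<in>{n. i \<le> n \<and> R n j \<noteq> 0}. R n j)"

definition tri_col_sum :: "'a::comm_monoid_add nmat \<Rightarrow> nat \<Rightarrow> nat \<Rightarrow> nat \<Rightarrow> 'a" where
  "tri_col_sum R m i j = (\<Sum>n\<in>{n. m \<le> n \<and> R (i + n * (n + 1) div 2) j \<noteq> 0}. R (i + n * (n + 1) div 2) j)"

end

theory Submission
  imports Defs
begin

definition Pf :: "(nat \<Rightarrow> nat) \<Rightarrow> 'a::{zero,one} nmat" where
  "Pf f = (\<lambda>r c. if c = f r then 1 else 0)"

definition csum :: "(nat \<Rightarrow> nat) \<Rightarrow> 'a::comm_monoid_add nmat \<Rightarrow> nat \<Rightarrow> nat \<Rightarrow> 'a" where
  "csum f S r j = (\<Sum>k\<in>{k. S ((f^^k) r) j \<noteq> 0}. S ((f^^k) r) j)"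

lemma col_bound:
  assumes "R \<in> RCFM" shows "\<exists>N. \<forall>i\<ge>N. R i j = 0"
proof -
  have "finite {i. R i j \<noteq> 0}" using assms by (auto simp: RCFM_def)
  then obtain N where "\<forall>i\<in>{i. R i j \<noteq> 0}. i < N" by (auto simp: finite_nat_set_iff_bounded)
  then show ?thesis by (metis leD mem_Collect_eq)
qed

lemma mult_on:
  assumes "finite F" "{l. M i l \<noteq> 0} \<subseteq> F"
  shows "(M \<star> R) i j = (\<Sum>l\<in>F. M i l * R l j)"
  unfolding nmat_mult_def by (rule sum.mono_neutral_left) (use assms in auto)

lemma id_mult: "(nmat_id \<star> (R::'k::field nmat)) i j = R i j"
proof -
  have "(nmat_id \<star> R) i j = (\<Sum>l\<in>{i}. nmat_id i l * R l j)"
    by (rule mult_on) (auto simp: nmat_id_def)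
  then show ?thesis by (simp add: nmat_id_def)
qed

lemma P_mult: "(Pf f \<star> (R::'k::field nmat)) i j = R (f i) j"
proof -
  have "(Pf f \<star> R) i j = (\<Sum>l\<in>{f i}. Pf f i l * R l j)"
    by (rule mult_on) (auto simp: Pf_def)
  then show ?thesis by (simp add: Pf_def)
qed

lemma A_mult: "(matA \<star> (R::'k::field nmat)) r j = (case r of 0 \<Rightarrow> 0 | Suc p \<Rightarrow> R p j)"
proof -
  have fin: "finite {l. r = Suc l}" by (rule finite_subset[of _ "{..r}"]) auto
  have "(matA \<star> R) r j = (\<Sum>l\<in>{l. r = Suc l}. matA r l * R l j)"
    by (rule mult_on[OF fin]) (auto simp: matA_def)
  then show ?thesis by (cases r) (auto simp: matA_def)
qed

lemma minus_mult:
  assumes "finite {l. M i l \<noteq> 0}" "finite {l. N i l \<noteq> 0}"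
  shows "(nmat_minus M N \<star> (R::'k::field nmat)) i j = (M \<star> R) i j - (N \<star> R) i j"
proof -
  let ?F = "{l. M i l \<noteq> 0} \<union> {l. N i l \<noteq> 0}"
  have "(nmat_minus M N \<star> R) i j = (\<Sum>l\<in>?F. nmat_minus M N i l * R l j)"
    by (rule mult_on) (use assms in \<open>auto simp: nmat_minus_def\<close>)
  also have "\<dots> = (\<Sum>l\<in>?F. M i l * R l j) - (\<Sum>l\<in>?F. N i l * R l j)"
    by (simp add: nmat_minus_def left_diff_distrib sum_subtractf)
  also have "(\<Sum>l\<in>?F. M i l * R l j) = (M \<star> R) i j"
    by (rule mult_on[symmetric]) (use assms in auto)
  also have "(\<Sum>l\<in>?F. N i l * R l j) = (N \<star> R) i j"
    by (rule mult_on[symmetric]) (use assms in auto)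
  finally show ?thesis .
qed

lemma IP_mult: "(nmat_minus nmat_id (Pf f) \<star> (R::'k::field nmat)) i j = R i j - R (f i) j"
proof -
  have "{l. (nmat_id::'k nmat) i l \<noteq> 0} = {i}" by (auto simp: nmat_id_def)
  moreover have "{l. (Pf f::'k nmat) i l \<noteq> 0} = {f i}" by (auto simp: Pf_def)
  ultimately show ?thesis by (simp add: minus_mult id_mult P_mult)
qed

lemma IA_mult: "(nmat_minus nmat_id matA \<star> (R::'k::field nmat)) r j
   = R r j - (case r of 0 \<Rightarrow> 0 | Suc p \<Rightarrow> R p j)"
proof -
  have "{l. (nmat_id::'k nmat) r l \<noteq> 0} = {r}" by (auto simp: nmat_id_def)
  moreover have "finite {l. (matA::'k nmat) r l \<noteq> 0}"
    by (rule finite_subset[of _ "{..r}"]) (auto simp: matA_def)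
  ultimately show ?thesis by (simp add: minus_mult id_mult A_mult)
qed

lemma funpow_ge:
  assumes inc: "\<And>r. r < f r"
  shows "r + k \<le> (f^^k) r"
  by (induction k) (auto intro: Suc_leI le_less_trans[OF _ inc])

lemma csum_bound:
  assumes inc: "\<And>r. r < f r" and z: "\<forall>i\<ge>N. S i j = 0"
  shows "csum f S r j = (\<Sum>k<N. S ((f^^k) r) j)"
proof -
  have ge: "r + k \<le> (f^^k) r" for k
    by (induction k) (auto intro: Suc_leI le_less_trans[OF _ inc])
  have "{k. S ((f^^k) r) j \<noteq> 0} \<subseteq> {..<N}"
  proof
    fix k assume "k \<in> {k. S ((f^^k) r) j \<noteq> 0}"
    then have "\<not> N \<le> (f^^k) r" using z by auto
    then show "k \<in> {..<N}" using ge[of k] by simp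
  qed
  then show ?thesis unfolding csum_def
    by (intro sum.mono_neutral_left) auto
qed

lemma gen_img:
  fixes f :: "nat \<Rightarrow> nat"
  assumes inj: "inj f" and inc: "\<And>r. r < f r"
  shows "left_mult_image (nmat_minus nmat_id (Pf f) :: 'k::field nmat)
     = {S \<in> RCFM. \<forall>r. finite {j. csum f S r j \<noteq> 0}}"
proof (intro set_eqI iffI)
  fix S :: "'k nmat"
  assume "S \<in> left_mult_image (nmat_minus nmat_id (Pf f))"
  then obtain R where R: "R \<in> RCFM" and SR: "S = nmat_minus nmat_id (Pf f) \<star> R"
    by (auto simp: left_mult_image_def)
  have Se: "S r j = R r j - R (f r) j" for r j by (simp add: SR IP_mult)
  have "S \<in> RCFM"
    unfolding RCFM_def
  proof (intro CollectI conjI allI)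
    fix i
    have "{j. S i j \<noteq> 0} \<subseteq> {j. R i j \<noteq> 0} \<union> {j. R (f i) j \<noteq> 0}" by (auto simp: Se)
    moreover have "finite ({j. R i j \<noteq> 0} \<union> {j. R (f i) j \<noteq> 0})" using R by (simp add: RCFM_def)
    ultimately show "finite {j. S i j \<noteq> 0}" by (rule finite_subset)
  next
    fix j
    have "{i. S i j \<noteq> 0} \<subseteq> {i. R i j \<noteq> 0} \<union> f -` {i. R i j \<noteq> 0}" by (auto simp: Se)
    moreover have "finite {i. R i j \<noteq> 0}" using R by (auto simp: RCFM_def)
    moreover have "finite (f -` {i. R i j \<noteq> 0})" by (rule finite_vimageI[OF _ inj]) fact
    ultimately show "finite {i. S i j \<noteq> 0}" by (meson finite_Un finite_subset)
  qed
  moreover have "csum f S r j = R r j" for r j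
  proof -
    obtain N where N: "\<forall>i\<ge>N. R i j = 0" using col_bound[OF R] by blast
    have ge: "k \<le> (f^^k) r" for k
      by (induction k) (auto intro: Suc_leI le_less_trans[OF _ inc])
    have "S i j = 0" if "N \<le> i" for i using N that inc[of i] by (simp add: Se)
    then have "\<forall>i\<ge>N. S i j = 0" by blast
    then have "csum f S r j = (\<Sum>k<N. S ((f^^k) r) j)" by (rule csum_bound[OF inc])
    also have "\<dots> = (\<Sum>k<N. R ((f^^k) r) j - R ((f^^(Suc k)) r) j)" by (simp add: Se)
    also have "\<dots> = R r j - R ((f^^N) r) j"
    proof -
      have "(\<Sum>k<N. (\<lambda>k. R ((f^^k) r) j) k - (\<lambda>k. R ((f^^k) r) j) (Suc k))
          = (\<lambda>k. R ((f^^k) r) j) 0 - (\<lambda>k. R ((f^^k) r) j) N"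
        by (rule sum_lessThan_telescope')
      then show ?thesis by simp
    qed
    also have "R ((f^^N) r) j = 0" using N ge by blast
    finally show ?thesis by simp
  qed
  moreover have "finite {j. R r j \<noteq> 0}" for r using R by (auto simp: RCFM_def)
  ultimately show "S \<in> {S \<in> RCFM. \<forall>r. finite {j. csum f S r j \<noteq> 0}}" by simp
next
  fix S :: "'k nmat"
  assume "S \<in> {S \<in> RCFM. \<forall>r. finite {j. csum f S r j \<noteq> 0}}"
  then have S: "S \<in> RCFM" and fin: "\<And>r. finite {j. csum f S r j \<noteq> 0}" by auto
  define R where "R = (\<lambda>r j. csum f S r j)"
  have "R \<in> RCFM"
    unfolding RCFM_def
  proof (intro CollectI conjI allI)
    fix i show "finite {j. R i j \<noteq> 0}" using fin by (simp add: R_def)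
  next
    fix j
    obtain N where N: "\<forall>i\<ge>N. S i j = 0" using col_bound[OF S] by blast
    have "R r j = 0" if "N \<le> r" for r
    proof -
      have "{k. S ((f^^k) r) j \<noteq> 0} = {}"
      proof -
        have "S ((f^^k) r) j = 0" for k
        proof -
          have "N \<le> (f^^k) r" using that funpow_ge[OF inc, of r k] by linarith
          then show ?thesis using N by blast
        qed
        then show ?thesis by simp
      qed
      then show ?thesis by (simp add: R_def csum_def)
    qed
    then have "{i. R i j \<noteq> 0} \<subseteq> {..<N}" by (auto simp: not_less[symmetric])
    then show "finite {i. R i j \<noteq> 0}" by (rule finite_subset) auto
  qed
  moreover have "S = nmat_minus nmat_id (Pf f) \<star> R"
  proof (intro ext)
    fix r j
    obtain N where N: "\<forall>i\<ge>N. S i j = 0" using col_bound[OF S] by blast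
    have N': "\<forall>i\<ge>Suc N. S i j = 0" using N by auto
    have "R r j = (\<Sum>k<Suc N. S ((f^^k) r) j)"
      unfolding R_def by (rule csum_bound[where f=f and S=S and N="Suc N" and j=j, OF inc N'])
    also have "\<dots> = S r j + (\<Sum>k<N. S ((f^^k) (f r)) j)"
      by (subst sum.lessThan_Suc_shift) (simp add: funpow_Suc_right del: funpow.simps)
    also have "(\<Sum>k<N. S ((f^^k) (f r)) j) = R (f r) j"
      unfolding R_def by (rule csum_bound[where f=f and S=S and N=N and j=j, OF inc N, symmetric])
    finally show "S r j = (nmat_minus nmat_id (Pf f) \<star> R) r j" by (simp add: IP_mult)
  qed
  ultimately show "S \<in> left_mult_image (nmat_minus nmat_id (Pf f))"
    by (auto simp: left_mult_image_def)
qed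


lemma part1: "left_mult_image (matA :: 'k::field nmat) = {R \<in> RCFM. \<forall>j. R 0 j = 0}"
proof (intro set_eqI iffI)
  fix S :: "'k nmat"
  assume "S \<in> left_mult_image matA"
  then obtain R where R: "R \<in> RCFM" and SR: "S = matA \<star> R" by (auto simp: left_mult_image_def)
  have Se: "S r j = (case r of 0 \<Rightarrow> 0 | Suc p \<Rightarrow> R p j)" for r j by (simp add: SR A_mult)
  have "S \<in> RCFM" unfolding RCFM_def
  proof (intro CollectI conjI allI)
    fix i show "finite {j. S i j \<noteq> 0}" using R by (cases i) (auto simp: Se RCFM_def)
  next
    fix j
    have "{i. S i j \<noteq> 0} \<subseteq> Suc ` {i. R i j \<noteq> 0}"
    proof
      fix i assume "i \<in> {i. S i j \<noteq> 0}"
      then show "i \<in> Suc ` {i. R i j \<noteq> 0}" by (cases i) (auto simp: Se)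
    qed
    moreover have "finite (Suc ` {i. R i j \<noteq> 0})" using R by (simp add: RCFM_def)
    ultimately show "finite {i. S i j \<noteq> 0}" by (rule finite_subset)
  qed
  then show "S \<in> {R \<in> RCFM. \<forall>j. R 0 j = 0}" by (simp add: Se)
next
  fix S :: "'k nmat"
  assume "S \<in> {R \<in> RCFM. \<forall>j. R 0 j = 0}"
  then have S: "S \<in> RCFM" and z: "\<forall>j. S 0 j = 0" by auto
  define R where "R = (\<lambda>p j. S (Suc p) j)"
  have "R \<in> RCFM" unfolding RCFM_def
  proof (intro CollectI conjI allI)
    fix i show "finite {j. R i j \<noteq> 0}" using S by (simp add: R_def RCFM_def)
  next
    fix j
    have "{i. R i j \<noteq> 0} = Suc -` {i. S i j \<noteq> 0}" by (auto simp: R_def)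
    moreover have "finite (Suc -` {i. S i j \<noteq> 0})"
      by (rule finite_vimageI) (use S in \<open>auto simp: RCFM_def\<close>)
    ultimately show "finite {i. R i j \<noteq> 0}" by simp
  qed
  moreover have "S = matA \<star> R" by (intro ext) (simp add: A_mult R_def z split: nat.split)
  ultimately show "S \<in> left_mult_image matA" by (auto simp: left_mult_image_def)
qed

lemma col_sum_bound:
  assumes z: "\<forall>i\<ge>N. S i j = 0"
  shows "col_sum S j = (\<Sum>i<N. S i j)"
proof -
  have "{i. S i j \<noteq> 0} \<subseteq> {..<N}"
  proof
    fix i assume "i \<in> {i. S i j \<noteq> 0}"
    then have "\<not> N \<le> i" using z by auto
    then show "i \<in> {..<N}" by simp
  qed
  then show ?thesis unfolding col_sum_def by (intro sum.mono_neutral_left) auto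
qed

lemma part2: "left_mult_image (nmat_minus nmat_id (matA :: 'k::field nmat))
           = {R \<in> RCFM. \<forall>j. col_sum R j = 0}"
proof (intro set_eqI iffI)
  fix S :: "'k nmat"
  assume "S \<in> left_mult_image (nmat_minus nmat_id matA)"
  then obtain R where R: "R \<in> RCFM" and SR: "S = nmat_minus nmat_id matA \<star> R"
    by (auto simp: left_mult_image_def)
  have Se: "S r j = R r j - (case r of 0 \<Rightarrow> 0 | Suc p \<Rightarrow> R p j)" for r j by (simp add: SR IA_mult)
  have "S \<in> RCFM" unfolding RCFM_def
  proof (intro CollectI conjI allI)
    fix i
    have "{j. S i j \<noteq> 0} \<subseteq> {j. R i j \<noteq> 0} \<union> {j. R (i - 1) j \<noteq> 0}"
    proof
      fix j assume "j \<in> {j. S i j \<noteq> 0}"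
      then show "j \<in> {j. R i j \<noteq> 0} \<union> {j. R (i - 1) j \<noteq> 0}" by (cases i) (auto simp: Se)
    qed
    moreover have "finite ({j. R i j \<noteq> 0} \<union> {j. R (i - 1) j \<noteq> 0})" using R by (simp add: RCFM_def)
    ultimately show "finite {j. S i j \<noteq> 0}" by (rule finite_subset)
  next
    fix j
    have "{i. S i j \<noteq> 0} \<subseteq> {i. R i j \<noteq> 0} \<union> Suc ` {i. R i j \<noteq> 0}"
    proof
      fix i assume "i \<in> {i. S i j \<noteq> 0}"
      then show "i \<in> {i. R i j \<noteq> 0} \<union> Suc ` {i. R i j \<noteq> 0}" by (cases i) (auto simp: Se)
    qed
    moreover have "finite ({i. R i j \<noteq> 0} \<union> Suc ` {i. R i j \<noteq> 0})" using R by (simp add: RCFM_def)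
    ultimately show "finite {i. S i j \<noteq> 0}" by (rule finite_subset)
  qed
  moreover have "col_sum S j = 0" for j
  proof -
    obtain N where N: "\<forall>i\<ge>N. R i j = 0" using col_bound[OF R] by blast
    have "\<forall>i\<ge>Suc N. S i j = 0" using N by (auto simp: Se split: nat.split)
    then have "col_sum S j = (\<Sum>i<Suc N. S i j)" by (rule col_sum_bound)
    also have "\<dots> = (\<Sum>i<Suc N. R i j) - (\<Sum>i<Suc N. (case i of 0 \<Rightarrow> 0 | Suc p \<Rightarrow> R p j))"
      by (simp add: Se sum_subtractf)
    also have "(\<Sum>i<Suc N. (case i of 0 \<Rightarrow> 0 | Suc p \<Rightarrow> R p j)) = (\<Sum>p<N. R p j)"
      by (subst sum.lessThan_Suc_shift) simp
    also have "(\<Sum>i<Suc N. R i j) = (\<Sum>i<N. R i j)" using N by simp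
    finally show ?thesis by simp
  qed
  ultimately show "S \<in> {R \<in> RCFM. \<forall>j. col_sum R j = 0}" by simp
next
  fix S :: "'k nmat"
  assume "S \<in> {R \<in> RCFM. \<forall>j. col_sum R j = 0}"
  then have S: "S \<in> RCFM" and z: "\<And>j. col_sum S j = 0" by auto
  define R where "R = (\<lambda>r j. \<Sum>n\<in>{..r}. S n j)"
  have "R \<in> RCFM" unfolding RCFM_def
  proof (intro CollectI conjI allI)
    fix r
    have "{j. R r j \<noteq> 0} \<subseteq> (\<Union>n\<in>{..r}. {j. S n j \<noteq> 0})"
    proof
      fix j assume "j \<in> {j. R r j \<noteq> 0}"
      then have "(\<Sum>n\<in>{..r}. S n j) \<noteq> 0" by (simp add: R_def)
      then show "j \<in> (\<Union>n\<in>{..r}. {j. S n j \<noteq> 0})"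
        using sum.neutral[of "{..r}" "\<lambda>n. S n j"] by blast
    qed
    moreover have "finite (\<Union>n\<in>{..r}. {j. S n j \<noteq> 0})" using S by (simp add: RCFM_def)
    ultimately show "finite {j. R r j \<noteq> 0}" by (rule finite_subset)
  next
    fix j
    obtain N where N: "\<forall>i\<ge>N. S i j = 0" using col_bound[OF S] by blast
    have "R r j = 0" if "N \<le> r" for r
    proof -
      have "R r j = (\<Sum>n<N. S n j)" unfolding R_def
        by (rule sum.mono_neutral_right) (use that N in auto)
      also have "\<dots> = col_sum S j" by (rule col_sum_bound[symmetric]) (use N in auto)
      finally show ?thesis using z by simp
    qed
    then have "{i. R i j \<noteq> 0} \<subseteq> {..<N}" by (auto simp: not_less[symmetric])
    then show "finite {i. R i j \<noteq> 0}" by (rule finite_subset) auto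
  qed
  moreover have "S = nmat_minus nmat_id matA \<star> R"
  proof (intro ext)
    fix r j
    show "S r j = (nmat_minus nmat_id matA \<star> R) r j"
      by (cases r) (simp_all add: IA_mult R_def)
  qed
  ultimately show "S \<in> left_mult_image (nmat_minus nmat_id matA)"
    by (auto simp: left_mult_image_def)
qed


lemma reindex_tail:
  fixes g :: "nat \<Rightarrow> 'a::comm_monoid_add"
  shows "(\<Sum>n\<in>{n. m \<le> n \<and> g n \<noteq> 0}. g n) = (\<Sum>k\<in>{k. g (k + m) \<noteq> 0}. g (k + m))"
proof (rule sum.reindex_cong[where l = "\<lambda>k. k + m"])
  show "inj_on (\<lambda>k. k + m) {k. g (k + m) \<noteq> 0}" by (auto simp: inj_on_def)
  show "{n. m \<le> n \<and> g n \<noteq> 0} = (\<lambda>k. k + m) ` {k. g (k + m) \<noteq> 0}"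
  proof (intro set_eqI iffI)
    fix x assume "x \<in> {n. m \<le> n \<and> g n \<noteq> 0}"
    then show "x \<in> (\<lambda>k. k + m) ` {k. g (k + m) \<noteq> 0}"
      by (intro image_eqI[where x = "x - m"]) auto
  qed auto
qed simp

lemma part3: "left_mult_image (nmat_minus nmat_id (nmat_transpose (matA :: 'k::field nmat)))
           = {R \<in> RCFM. \<forall>i. finite {j. tail_col_sum R i j \<noteq> 0}}"
proof -
  have T: "nmat_transpose (matA :: 'k nmat) = Pf Suc"
    by (auto simp: fun_eq_iff nmat_transpose_def matA_def Pf_def)
  have E: "tail_col_sum R i j = csum Suc R i j" for R :: "'k nmat" and i j
    unfolding tail_col_sum_def csum_def Suc_funpow
    using reindex_tail[where m=i and g="\<lambda>n. R n j"] by simp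
  show ?thesis unfolding T E by (rule gen_img) auto
qed

definition tri :: "nat \<Rightarrow> nat" where "tri m = m * (m + 1) div 2"

lemma tri_Suc: "tri (Suc m) = tri m + Suc m"
proof -
  have "Suc m * (Suc m + 1) = m * (m + 1) + 2 * Suc m" by simp
  then show ?thesis unfolding tri_def by simp
qed

lemma tri_mono: "m \<le> m' \<Longrightarrow> tri m \<le> tri m'"
  unfolding tri_def by (intro div_le_mono mult_le_mono) auto

definition blk :: "nat \<Rightarrow> nat" where "blk r = (LEAST m. r < tri (Suc m))"

definition fB :: "nat \<Rightarrow> nat" where "fB r = r + Suc (blk r)"

lemma blk_eq:
  assumes "i \<le> m" shows "blk (tri m + i) = m"
  unfolding blk_def
proof (rule Least_equality)
  show "tri m + i < tri (Suc m)" using assms by (simp add: tri_Suc)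
next
  fix y assume y: "tri m + i < tri (Suc y)"
  show "m \<le> y"
  proof (rule ccontr)
    assume "\<not> m \<le> y"
    then have "tri (Suc y) \<le> tri m" by (intro tri_mono) simp
    then show False using y by simp
  qed
qed

lemma decomp: "\<exists>m i. i \<le> m \<and> r = tri m + i"
proof (induction r)
  case 0
  show ?case by (rule exI[of _ 0]) (simp add: tri_def)
next
  case (Suc r)
  then obtain m i where mi: "i \<le> m" "r = tri m + i" by blast
  show ?case
  proof (cases "i < m")
    case True
    then show ?thesis using mi by (intro exI[of _ m] exI[of _ "Suc i"]) simp
  next
    case False
    then show ?thesis using mi by (intro exI[of _ "Suc m"] exI[of _ 0]) (simp add: tri_Suc)
  qed
qed

lemma fB_tri: "i \<le> m \<Longrightarrow> fB (tri m + i) = tri (Suc m) + i"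
  by (simp add: fB_def blk_eq tri_Suc)

lemma fB_less: "r < fB r" by (simp add: fB_def)

lemma fB_mono:
  assumes "r < r'" shows "fB r < fB r'"
proof -
  obtain m i where mi: "i \<le> m" "r = tri m + i" using decomp by blast
  obtain m' i' where mi': "i' \<le> m'" "r' = tri m' + i'" using decomp by blast
  have "m \<le> m'"
  proof (rule ccontr)
    assume "\<not> m \<le> m'"
    then have "tri (Suc m') \<le> tri m" by (intro tri_mono) simp
    moreover have "r' < tri (Suc m')" using mi' by (simp add: tri_Suc)
    ultimately show False using assms mi by simp
  qed
  then show ?thesis using assms mi mi' by (simp add: fB_def blk_eq)
qed

lemma fB_inj: "inj fB"
  by (rule strict_mono_imp_inj_on) (simp add: strict_mono_def fB_mono)

lemma fB_chain: "i \<le> m \<Longrightarrow> (fB^^k) (tri m + i) = tri (m + k) + i"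
  by (induction k) (simp_all add: fB_tri)

lemma B_transpose: "nmat_transpose (matB :: 'k::field nmat) = Pf fB"
proof (intro ext)
  fix r c
  have "(\<exists>n i. 0 < n \<and> i < n \<and> c = n * (n + 1) div 2 + i \<and> r = (n - 1) * n div 2 + i)
        \<longleftrightarrow> c = fB r"
  proof
    assume "\<exists>n i. 0 < n \<and> i < n \<and> c = n * (n + 1) div 2 + i \<and> r = (n - 1) * n div 2 + i"
    then obtain n i where h: "0 < n" "i < n" "c = n * (n + 1) div 2 + i" "r = (n - 1) * n div 2 + i"
      by blast
    obtain m where n: "n = Suc m" using h(1) by (cases n) auto
    have "r = tri m + i" using h(4) by (simp add: n tri_def mult.commute)
    moreover have "c = tri (Suc m) + i" using h(3) by (simp add: n tri_def)
    ultimately show "c = fB r" using h(2) n by (simp add: fB_tri)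
  next
    assume c: "c = fB r"
    obtain m i where mi: "i \<le> m" "r = tri m + i" using decomp by blast
    then have "c = tri (Suc m) + i" using c by (simp add: fB_tri)
    then show "\<exists>n i. 0 < n \<and> i < n \<and> c = n * (n + 1) div 2 + i \<and> r = (n - 1) * n div 2 + i"
      using mi by (intro exI[of _ "Suc m"] exI[of _ i]) (simp add: tri_def mult.commute)
  qed
  then show "nmat_transpose (matB :: 'k nmat) r c = Pf fB r c"
    by (simp add: nmat_transpose_def matB_def Pf_def)
qed

lemma tri_col_csum:
  assumes "i \<le> m"
  shows "tri_col_sum R m i j = csum fB R (tri m + i) j"
proof -
  have "tri_col_sum R m i j = (\<Sum>k\<in>{k. R (i + (k + m) * (k + m + 1) div 2) j \<noteq> 0}.
           R (i + (k + m) * (k + m + 1) div 2) j)"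
    unfolding tri_col_sum_def by (rule reindex_tail)
  also have "\<dots> = csum fB R (tri m + i) j"
    unfolding csum_def fB_chain[OF assms] by (simp add: tri_def add.commute)
  finally show ?thesis .
qed

lemma part4: "left_mult_image (nmat_minus nmat_id (nmat_transpose (matB :: 'k::field nmat)))
           = {R \<in> RCFM. \<forall>m i. i \<le> m \<longrightarrow> finite {j. tri_col_sum R m i j \<noteq> 0}}"
proof -
  have G: "left_mult_image (nmat_minus nmat_id (nmat_transpose (matB :: 'k nmat)))
     = {S \<in> RCFM. \<forall>r. finite {j. csum fB S r j \<noteq> 0}}"
    unfolding B_transpose by (rule gen_img[OF fB_inj fB_less])
  have "(\<forall>r. finite {j. csum fB S r j \<noteq> 0})
      \<longleftrightarrow> (\<forall>m i. i \<le> m \<longrightarrow> finite {j. tri_col_sum S m i j \<noteq> 0})" for S :: "'k nmat"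
  proof
    assume "\<forall>r. finite {j. csum fB S r j \<noteq> 0}"
    then show "\<forall>m i. i \<le> m \<longrightarrow> finite {j. tri_col_sum S m i j \<noteq> 0}"
      by (simp add: tri_col_csum)
  next
    assume h: "\<forall>m i. i \<le> m \<longrightarrow> finite {j. tri_col_sum S m i j \<noteq> 0}"
    show "\<forall>r. finite {j. csum fB S r j \<noteq> 0}"
    proof
      fix r
      obtain m i where mi: "i \<le> m" "r = tri m + i" using decomp by blast
      then show "finite {j. csum fB S r j \<noteq> 0}" using h by (simp add: tri_col_csum)
    qed
  qed
  then show ?thesis unfolding G by blast
qed

theorem lemmaA2:
  shows "(left_mult_image (matA :: 'k::field nmat) = {R \<in> RCFM. \<forall>j. R 0 j = 0}) \<and>
         (left_mult_image (nmat_minus nmat_id (matA :: 'k::field nmat))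
           = {R \<in> RCFM. \<forall>j. col_sum R j = 0}) \<and>
         (left_mult_image (nmat_minus nmat_id (nmat_transpose (matA :: 'k::field nmat)))
           = {R \<in> RCFM. \<forall>i. finite {j. tail_col_sum R i j \<noteq> 0}}) \<and>
         (left_mult_image (nmat_minus nmat_id (nmat_transpose (matB :: 'k::field nmat)))
           = {R \<in> RCFM. \<forall>m i. i \<le> m \<longrightarrow> finite {j. tri_col_sum R m i j \<noteq> 0}})"
  using part1 part2 part3 part4 by blast

end
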